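(* Let $C=(V',E')$ be a finite connected undirected simple graph, and let $P$ be the set of BFS-trees of $C$, one with root $v$ for each $v\in V'$. Let $T_m\in P$, with root $r$, satisfy $S_d(T_m)=\min_{T\in P}S_d(T)$. Then $r$ is a centroid of $T_m$.
   Context: A BFS-tree of $C$ with root $v$ is the spanning tree constructed by a breadth-first search of $C$ starting at $v$ (visiting vertices level by level by distance from $v$, each non-root vertex attached to the vertex from which it was first discovered). For a rooted tree $T=(V_T,E_T)$ with root $r$, $d_T(x,y)$ is the number of edges on the path between $x$ and $y$ in $T$ and $S_d(T)=\sum_{x\in V_T}d_T(r,x)$. The vertex deviation of $v$ in $T$ is $m(v)=\frac{1}{|V_T|}\sum_{u\in V_T}d_T(v,u)$, and a centroid of $T$ is a vertex minimizing $m(v)$. *)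

theory Defs
  imports Complex_Main
begin

definition simple_graph :: "'a set \<Rightarrow> 'a set set \<Rightarrow> bool" where
  "simple_graph V E \<longleftrightarrow> finite V \<and>
     (\<forall>e\<in>E. \<exists>x y. x \<noteq> y \<and> e = {x, y} \<and> x \<in> V \<and> y \<in> V)"

fun walk :: "'a set set \<Rightarrow> 'a list \<Rightarrow> bool" where
  "walk E [] = False"
| "walk E [x] = True"
| "walk E (x # y # xs) = ({x, y} \<in> E \<and> walk E (y # xs))"

definition connected_graph :: "'a set \<Rightarrow> 'a set set \<Rightarrow> bool" where
  "connected_graph V E \<longleftrightarrow>
     (\<forall>x\<in>V. \<forall>y\<in>V. \<exists>xs. walk E xs \<and> hd xs = x \<and> last xs = y)"

definition gdist :: "'a set set \<Rightarrow> 'a \<Rightarrow> 'a \<Rightarrow> nat" where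
  "gdist E x y = (LEAST n. \<exists>xs. walk E xs \<and> hd xs = x \<and> last xs = y \<and> length xs = Suc n)"

text \<open>Breadth-first search as a nondeterministic process: state = queue, visited set,
  tree edges built so far.\<close>
inductive bfs_run :: "'a set set \<Rightarrow> 'a list \<Rightarrow> 'a set \<Rightarrow> 'a set set \<Rightarrow> 'a set set \<Rightarrow> bool"
  for E where
  finish: "bfs_run E [] vis T T"
| step: "\<lbrakk> set ns = {w. {u, w} \<in> E \<and> w \<notin> vis}; distinct ns;
          bfs_run E (q @ ns) (vis \<union> set ns) (T \<union> (\<lambda>w. {u, w}) ` set ns) T' \<rbrakk>
         \<Longrightarrow> bfs_run E (u # q) vis T T'"

definition bfs_tree :: "'a set \<Rightarrow> 'a set set \<Rightarrow> 'a \<Rightarrow> 'a set set \<Rightarrow> bool" where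
  "bfs_tree V E v T \<longleftrightarrow> v \<in> V \<and> bfs_run E [v] {v} {} T"

definition Sd :: "'a set \<Rightarrow> 'a set set \<Rightarrow> 'a \<Rightarrow> nat" where
  "Sd VT ET r = (\<Sum>x\<in>VT. gdist ET r x)"

definition vertex_deviation :: "'a set \<Rightarrow> 'a set set \<Rightarrow> 'a \<Rightarrow> real" where
  "vertex_deviation VT ET v = (1 / real (card VT)) * (\<Sum>u\<in>VT. real (gdist ET v u))"

definition centroid :: "'a set \<Rightarrow> 'a set set \<Rightarrow> 'a \<Rightarrow> bool" where
  "centroid VT ET v \<longleftrightarrow> v \<in> VT \<and>
     (\<forall>w\<in>VT. vertex_deviation VT ET v \<le> vertex_deviation VT ET w)"

end

theory Submission
  imports Defs
begin

lemma walk_Cons: "walk E (x # xs) \<longleftrightarrow> (xs = [] \<or> ({x, hd xs} \<in> E \<and> walk E xs))"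
  by (cases xs) auto

lemma walk_snoc: "walk E (xs @ [y]) \<longleftrightarrow> (xs = [] \<or> (walk E xs \<and> {last xs, y} \<in> E))"
  by (induction xs) (auto simp: walk_Cons hd_append)

lemma walk_append: "walk E (xs @ y # ys) \<longleftrightarrow> walk E (xs @ [y]) \<and> walk E (y # ys)"
  by (induction xs) (auto simp: walk_Cons hd_append)

lemma walk_rev: "walk E xs \<Longrightarrow> walk E (rev xs)"
proof (induction E xs rule: walk.induct)
  case (3 E x y xs)
  then show ?case using walk_snoc[of E "rev (y#xs)" x] by (auto simp: insert_commute)
qed auto

lemma walk_mono: "walk E xs \<Longrightarrow> E \<subseteq> F \<Longrightarrow> walk F xs"
  by (induction E xs rule: walk.induct) auto

lemma walk_closed: "walk E xs \<Longrightarrow> hd xs \<in> S \<Longrightarrow> (\<forall>y z. y \<in> S \<longrightarrow> {y,z} \<in> E \<longrightarrow> z \<in> S) \<Longrightarrow> last xs \<in> S"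
  by (induction E xs rule: walk.induct) auto

definition rch :: "'a set set \<Rightarrow> 'a \<Rightarrow> 'a \<Rightarrow> nat \<Rightarrow> bool" where
  "rch E a x n \<longleftrightarrow> (\<exists>xs. walk E xs \<and> hd xs = a \<and> last xs = x \<and> length xs = Suc n)"

lemma gdist_rch_def: "gdist E a x = (LEAST n. rch E a x n)"
  unfolding gdist_def rch_def by simp

lemma gdist_le: "rch E a x n \<Longrightarrow> gdist E a x \<le> n"
  unfolding gdist_rch_def by (rule Least_le)

lemma gdist_rch: "rch E a x n \<Longrightarrow> rch E a x (gdist E a x)"
  unfolding gdist_rch_def by (rule LeastI)

lemma rch_mono: "rch E a b n \<Longrightarrow> E \<subseteq> F \<Longrightarrow> rch F a b n"
  unfolding rch_def using walk_mono by blast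

lemma rch_edge: "rch E a x n \<Longrightarrow> {x,y} \<in> E \<Longrightarrow> rch E a y (Suc n)"
  unfolding rch_def
proof (elim exE conjE)
  fix xs assume "walk E xs" "hd xs = a" "last xs = x" "length xs = Suc n" "{x,y} \<in> E"
  then show "\<exists>xs. walk E xs \<and> hd xs = a \<and> last xs = y \<and> length xs = Suc (Suc n)"
    by (intro exI[of _ "xs @ [y]"]) (auto simp: walk_snoc hd_append)
qed

lemma gdist_edge: "rch E a x n \<Longrightarrow> {x,y} \<in> E \<Longrightarrow> gdist E a y \<le> gdist E a x + 1"
proof -
  assume a: "rch E a x n" "{x,y} \<in> E"
  have "rch E a y (Suc (gdist E a x))" using rch_edge[OF gdist_rch[OF a(1)] a(2)] .
  then show ?thesis using gdist_le by fastforce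
qed

lemma gdist_0: "rch E a x n \<Longrightarrow> gdist E a x = 0 \<Longrightarrow> x = a"
proof -
  assume a: "rch E a x n" "gdist E a x = 0"
  then obtain xs where "walk E xs" "hd xs = a" "last xs = x" "length xs = 1"
    using gdist_rch[OF a(1)] unfolding rch_def by auto
  then show "x = a" by (cases xs) auto
qed

lemma rch_0: "rch E a a 0"
  unfolding rch_def by (intro exI[of _ "[a]"]) auto

lemma gdist_pred:
  assumes "rch E a y n" "gdist E a y > 0"
  shows "\<exists>p. {p,y} \<in> E \<and> rch E a p (gdist E a y - 1) \<and> gdist E a p = gdist E a y - 1"
proof -
  obtain xs where xs: "walk E xs" "hd xs = a" "last xs = y" "length xs = Suc (gdist E a y)"
    using gdist_rch[OF assms(1)] unfolding rch_def by blast
  define ys where "ys = butlast xs"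
  have ne: "xs \<noteq> []" using xs by auto
  have xs_eq: "xs = ys @ [y]" using ne xs(3) unfolding ys_def by (metis append_butlast_last_id)
  have ysne: "ys \<noteq> []" using xs(4) assms(2) xs_eq by auto
  have w: "walk E ys" "{last ys, y} \<in> E" using xs(1) ysne unfolding xs_eq walk_snoc by auto
  have "hd ys = a" using xs(2) ysne xs_eq by simp
  then have r: "rch E a (last ys) (gdist E a y - 1)"
    unfolding rch_def using w ysne xs(4) xs_eq assms(2) by (intro exI[of _ ys]) auto
  have "gdist E a (last ys) \<le> gdist E a y - 1" using gdist_le[OF r] .
  moreover have "gdist E a y \<le> gdist E a (last ys) + 1" using gdist_edge[OF r w(2)] .
  ultimately show ?thesis using r w by (intro exI[of _ "last ys"]) auto
qed

lemma rch_join: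
  assumes "rch T a b n" "rch T a c m" shows "\<exists>k. rch T b c k"
proof -
  obtain xs where xs: "walk T xs" "hd xs = a" "last xs = b" "length xs = Suc n"
    using assms(1) unfolding rch_def by blast
  obtain ys where ys: "walk T ys" "hd ys = a" "last ys = c" "length ys = Suc m"
    using assms(2) unfolding rch_def by blast
  obtain x0 zs0 where xz: "xs = x0 # zs0" using xs(4) by (cases xs) simp_all
  define zs where "zs = rev zs0"
  have zs: "rev xs = zs @ [a]" using xz xs(2) unfolding zs_def by simp
  obtain ws where ws: "ys = a # ws" using ys(2,4) by (cases ys) simp_all
  have w1: "walk T (zs @ [a])" using walk_rev[OF xs(1)] zs by simp
  have "walk T (zs @ a # ws)" using w1 ys(1) ws by (intro walk_append[THEN iffD2]) simp
  moreover have "hd (zs @ a # ws) = b"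
  proof -
    have "hd (rev xs) = b" using xs(3) by (simp add: hd_rev)
    then show ?thesis using zs by (cases zs) auto
  qed
  moreover have "last (zs @ a # ws) = c" using ys ws by simp
  ultimately have "rch T b c (length zs + length ws)" unfolding rch_def
    by (intro exI[of _ "zs @ a # ws"]) simp
  then show ?thesis ..
qed


definition Inv :: "'a set set \<Rightarrow> 'a \<Rightarrow> 'a list \<Rightarrow> 'a set \<Rightarrow> 'a set set \<Rightarrow> bool" where
  "Inv E v q vis T \<longleftrightarrow>
     v \<in> vis \<and> set q \<subseteq> vis \<and> distinct q \<and> T \<subseteq> E \<and>
     (\<forall>x\<in>vis. (\<exists>n. rch E v x n) \<and> rch T v x (gdist E v x)) \<and>
     (\<forall>y\<in>vis - set q. \<forall>z. {y,z} \<in> E \<longrightarrow> z \<in> vis) \<and>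
     sorted (map (gdist E v) q) \<and> (\<forall>x\<in>set q. gdist E v x \<le> gdist E v (hd q) + 1) \<and>
     (q \<noteq> [] \<longrightarrow> (\<forall>x. (\<exists>n. rch E v x n) \<longrightarrow> gdist E v x < gdist E v (hd q) \<longrightarrow> x \<in> vis - set q))"

lemma inv_init: "Inv E v [v] {v} {}"
  unfolding Inv_def using rch_0[of "{}" v] rch_0[of E v] gdist_le[OF rch_0[of E v]] by auto

lemma inv_step:
  assumes I: "Inv E v (u # q) vis T"
    and ns: "set ns = {w. {u, w} \<in> E \<and> w \<notin> vis}" and dns: "distinct ns"
  shows "Inv E v (q @ ns) (vis \<union> set ns) (T \<union> (\<lambda>w. {u, w}) ` set ns)"
proof -
  let ?d = "gdist E v"
  let ?T' = "T \<union> (\<lambda>w. {u, w}) ` set ns"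
  note Ic = I[unfolded Inv_def]
  have vv: "v \<in> vis" using Ic by blast
  have qv: "set (u#q) \<subseteq> vis" using Ic by blast
  have dq: "distinct (u#q)" using Ic by blast
  have TE: "T \<subseteq> E" using Ic by blast
  have I3: "\<And>x. x \<in> vis \<Longrightarrow> (\<exists>n. rch E v x n) \<and> rch T v x (?d x)" using Ic by blast
  have I4: "\<And>y z. y \<in> vis - set (u#q) \<Longrightarrow> {y,z} \<in> E \<Longrightarrow> z \<in> vis" using Ic by blast
  have I5: "sorted (map ?d (u#q))" using Ic by blast
  have I5b: "\<And>x. x \<in> set (u#q) \<Longrightarrow> ?d x \<le> ?d u + 1"
  proof -
    have "\<forall>x\<in>set (u#q). ?d x \<le> ?d (hd (u#q)) + 1" using Ic by blast
    then show "\<And>x. x \<in> set (u#q) \<Longrightarrow> ?d x \<le> ?d u + 1" by auto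
  qed
  have I6: "\<And>x n. rch E v x n \<Longrightarrow> ?d x < ?d u \<Longrightarrow> x \<in> vis - set (u#q)"
  proof -
    have "u # q \<noteq> [] \<longrightarrow> (\<forall>x. (\<exists>n. rch E v x n) \<longrightarrow> ?d x < ?d (hd (u#q)) \<longrightarrow> x \<in> vis - set (u#q))"
      using Ic by blast
    then show "\<And>x n. rch E v x n \<Longrightarrow> ?d x < ?d u \<Longrightarrow> x \<in> vis - set (u#q)" by auto
  qed
  have uv: "u \<in> vis" using qv by auto
  obtain nu where nu: "rch E v u nu" using I3[OF uv] by blast
  have nsE: "\<And>w. w \<in> set ns \<Longrightarrow> {u,w} \<in> E \<and> w \<notin> vis" using ns by auto
  have K: "?d w = ?d u + 1" if w: "w \<in> set ns" for w
  proof (rule ccontr)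
    assume ne: "?d w \<noteq> ?d u + 1"
    have le: "?d w \<le> ?d u + 1" using gdist_edge[OF nu] nsE[OF w] by blast
    have rw: "rch E v w (Suc nu)" using rch_edge[OF nu] nsE[OF w] by blast
    show False
    proof (cases "?d w = 0")
      case True
      then have "w = v" using gdist_0[OF rw] by blast
      then show False using vv nsE[OF w] by blast
    next
      case False
      then obtain p where p: "{p,w} \<in> E" "rch E v p (?d w - 1)" "?d p = ?d w - 1"
        using gdist_pred[OF rw] by blast
      have "?d p < ?d u" using p(3) ne le False by linarith
      then have "p \<in> vis - set (u#q)" using I6[OF p(2)] by blast
      then have "w \<in> vis" using I4 p(1) by blast
      then show False using nsE[OF w] by blast
    qed
  qed
  have sq: "sorted (map ?d q)" and hq: "\<And>x. x \<in> set q \<Longrightarrow> ?d u \<le> ?d x" using I5 by auto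
  have disj: "set q \<inter> set ns = {}" using qv nsE by auto
  have hdin: "q @ ns \<noteq> [] \<Longrightarrow> hd (q @ ns) \<in> set q \<or> hd (q @ ns) \<in> set ns"
    by (cases q) (simp_all add: hd_in_set)
  have hdle: "q @ ns \<noteq> [] \<Longrightarrow> ?d (hd (q @ ns)) \<le> ?d u + 1"
  proof -
    assume "q @ ns \<noteq> []"
    then consider "hd (q @ ns) \<in> set q" | "hd (q @ ns) \<in> set ns" using hdin by blast
    then show ?thesis
    proof cases
      case 1 then show ?thesis using I5b[of "hd (q @ ns)"] by simp
    next
      case 2 then show ?thesis using K[of "hd (q @ ns)"] by simp
    qed
  qed
  have hdge: "q @ ns \<noteq> [] \<Longrightarrow> ?d u \<le> ?d (hd (q @ ns))"
  proof -
    assume "q @ ns \<noteq> []"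
    then consider "hd (q @ ns) \<in> set q" | "hd (q @ ns) \<in> set ns" using hdin by blast
    then show ?thesis
    proof cases
      case 1 then show ?thesis using hq[of "hd (q @ ns)"] by simp
    next
      case 2 then show ?thesis using K[of "hd (q @ ns)"] by simp
    qed
  qed
  have P1: "v \<in> vis \<union> set ns" using vv by blast
  have P2: "set (q @ ns) \<subseteq> vis \<union> set ns" using qv by auto
  have P3: "distinct (q @ ns)" using dq dns disj by auto
  have "(\<lambda>w. {u,w}) ` set ns \<subseteq> E" using nsE by blast
  then have P4: "?T' \<subseteq> E" using TE by blast
  have P5: "\<forall>x\<in>vis \<union> set ns. (\<exists>n. rch E v x n) \<and> rch ?T' v x (?d x)"
  proof
    fix x assume x: "x \<in> vis \<union> set ns"
    show "(\<exists>n. rch E v x n) \<and> rch ?T' v x (?d x)"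
    proof (cases "x \<in> vis")
      case True
      then show ?thesis using I3 rch_mono[of T v x "?d x" ?T'] by blast
    next
      case False
      then have xn: "x \<in> set ns" using x by blast
      have "rch ?T' v u (?d u)" using I3[OF uv] rch_mono[of T v u "?d u" ?T'] by blast
      moreover have "{u,x} \<in> ?T'" using xn by blast
      ultimately have r1: "rch ?T' v x (Suc (?d u))" by (rule rch_edge)
      have r2: "rch E v x (Suc nu)" using rch_edge[OF nu] nsE[OF xn] by blast
      have r3: "?d x = Suc (?d u)" using K[OF xn] by simp
      show ?thesis unfolding r3 using r1 r2 by blast
    qed
  qed
  have P6: "\<forall>y\<in>(vis \<union> set ns) - set (q @ ns). \<forall>z. {y,z} \<in> E \<longrightarrow> z \<in> vis \<union> set ns"
  proof (intro ballI allI impI)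
    fix y z assume y: "y \<in> (vis \<union> set ns) - set (q @ ns)" and e: "{y,z} \<in> E"
    show "z \<in> vis \<union> set ns"
    proof (cases "y = u")
      case True then show ?thesis using e ns by blast
    next
      case False
      then have "y \<in> vis - set (u#q)" using y by auto
      then show ?thesis using I4 e by blast
    qed
  qed
  have P7: "sorted (map ?d (q @ ns))"
  proof -
    have "map ?d ns = map (\<lambda>_. ?d u + 1) ns" using K by (intro map_cong) auto
    also have "\<dots> = replicate (length ns) (?d u + 1)" by (rule map_replicate_const)
    finally have s2: "sorted (map ?d ns)" by simp
    have "\<forall>a\<in>set (map ?d q). \<forall>b\<in>set (map ?d ns). a \<le> b"
    proof (intro ballI)
      fix a b assume a: "a \<in> set (map ?d q)" and b: "b \<in> set (map ?d ns)"
      obtain x where "x \<in> set q" "a = ?d x" using a by auto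
      then have "a \<le> ?d u + 1" using I5b[of x] by simp
      moreover obtain y where "y \<in> set ns" "b = ?d y" using b by auto
      then have "b = ?d u + 1" using K by simp
      ultimately show "a \<le> b" by simp
    qed
    then show ?thesis using sq s2 by (simp only: map_append sorted_append)
  qed
  have P8: "\<forall>x\<in>set (q @ ns). ?d x \<le> ?d (hd (q @ ns)) + 1"
  proof
    fix x assume x: "x \<in> set (q @ ns)"
    then have "q @ ns \<noteq> []" by auto
    then have "?d u \<le> ?d (hd (q @ ns))" using hdge by blast
    moreover have "?d x \<le> ?d u + 1"
    proof (cases "x \<in> set q")
      case True then show ?thesis using I5b[of x] by simp
    next
      case False then have "x \<in> set ns" using x by simp
      then show ?thesis using K[of x] by simp
    qed
    ultimately show "?d x \<le> ?d (hd (q @ ns)) + 1" by linarith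
  qed
  have P9: "q @ ns \<noteq> [] \<longrightarrow> (\<forall>x. (\<exists>n. rch E v x n) \<longrightarrow> ?d x < ?d (hd (q @ ns)) \<longrightarrow> x \<in> (vis \<union> set ns) - set (q @ ns))"
  proof (intro impI allI)
    fix x assume ne: "q @ ns \<noteq> []" and rx: "\<exists>n. rch E v x n" and lt: "?d x < ?d (hd (q @ ns))"
    obtain n where rn: "rch E v x n" using rx by blast
    show "x \<in> (vis \<union> set ns) - set (q @ ns)"
    proof (cases "?d x < ?d u")
      case True
      then have "x \<in> vis - set (u#q)" using I6[OF rn] by blast
      then show ?thesis using nsE by auto
    next
      case False
      then have dxu: "?d x = ?d u" using lt hdle[OF ne] by linarith
      have xv: "x \<in> vis"
      proof (cases "x = u")
        case True then show ?thesis using uv by simp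
      next
        case xu: False
        show ?thesis
        proof (cases "?d x = 0")
          case True then show ?thesis using gdist_0[OF rn] vv by blast
        next
          case False
          then obtain p where p: "{p,x} \<in> E" "rch E v p (?d x - 1)" "?d p = ?d x - 1"
            using gdist_pred[OF rn] by blast
          have "?d p < ?d u" using p(3) dxu False by linarith
          then have "p \<in> vis - set (u#q)" using I6[OF p(2)] by blast
          then show "x \<in> vis" using I4 p(1) by blast
        qed
      qed
      have "x \<notin> set q"
      proof
        assume xq: "x \<in> set q"
        then have "hd (q @ ns) = hd q" by (cases q) auto
        moreover have "?d (hd q) \<le> ?d x" using sq xq by (cases q) auto
        ultimately show False using lt by (metis leD)
      qed
      moreover have "x \<notin> set ns" using xv nsE by blast
      ultimately show ?thesis using xv by auto
    qed
  qed
  show ?thesis unfolding Inv_def using P1 P2 P3 P4 P5 P6 P7 P8 P9 by blast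
qed

lemma bfs_run_inv:
  "bfs_run E q vis T T' \<Longrightarrow> Inv E v q vis T \<Longrightarrow>
     T' \<subseteq> E \<and> (\<forall>x. (\<exists>n. rch E v x n) \<longrightarrow> rch T' v x (gdist E v x))"
proof (induction rule: bfs_run.induct)
  case (finish vis T)
  have cl: "\<forall>y z. y \<in> vis \<longrightarrow> {y,z} \<in> E \<longrightarrow> z \<in> vis" and vv: "v \<in> vis"
    and TE: "T \<subseteq> E" and I3: "\<forall>x\<in>vis. rch T v x (gdist E v x)"
    using finish unfolding Inv_def by simp_all
  have "x \<in> vis" if rx: "rch E v x n" for x n
  proof -
    obtain xs where "walk E xs" "hd xs = v" "last xs = x" using rx unfolding rch_def by blast
    then show ?thesis using walk_closed[of E xs vis] cl vv by simp
  qed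
  then show ?case using TE I3 by blast
next
  case (step ns u vis q T T')
  have "Inv E v (q @ ns) (vis \<union> set ns) (T \<union> (\<lambda>w. {u, w}) ` set ns)"
    using inv_step[OF step.prems step.hyps(1) step.hyps(2)] .
  then show ?case by (rule step.IH)
qed

lemma bfs_tree_props:
  assumes "bfs_tree V E v T" "connected_graph V E"
  shows "T \<subseteq> E \<and> (\<forall>x\<in>V. rch T v x (gdist E v x))"
proof -
  have v: "v \<in> V" and run: "bfs_run E [v] {v} {} T" using assms(1) unfolding bfs_tree_def by blast+
  have "\<exists>n. rch E v x n" if xV: "x \<in> V" for x
  proof -
    obtain xs where "walk E xs" "hd xs = v" "last xs = x"
      using assms(2) v xV unfolding connected_graph_def by blast
    moreover have "xs \<noteq> []" using \<open>walk E xs\<close> by (cases xs) auto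
    ultimately have "rch E v x (length xs - 1)" unfolding rch_def by auto
    then show ?thesis by blast
  qed
  moreover have "T \<subseteq> E \<and> (\<forall>x. (\<exists>n. rch E v x n) \<longrightarrow> rch T v x (gdist E v x))"
    by (rule bfs_run_inv[OF run inv_init])
  ultimately show ?thesis by blast
qed

theorem lemma5p14:
  fixes V :: "'a set" and E :: "'a set set" and bfs :: "'a \<Rightarrow> 'a set set" and r :: 'a
  assumes "simple_graph V E"
    and "connected_graph V E"
    and "\<forall>v\<in>V. bfs_tree V E v (bfs v)"
    and "r \<in> V"
    and "\<forall>v\<in>V. Sd V (bfs r) r \<le> Sd V (bfs v) v"
  shows "centroid V (bfs r) r"
proof -
  have fin: "finite V" using assms(1) unfolding simple_graph_def by blast
  have props: "\<And>w. w \<in> V \<Longrightarrow> bfs w \<subseteq> E \<and> (\<forall>x\<in>V. rch (bfs w) w x (gdist E w x))"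
  proof -
    fix w assume w: "w \<in> V"
    show "bfs w \<subseteq> E \<and> (\<forall>x\<in>V. rch (bfs w) w x (gdist E w x))"
      by (rule bfs_tree_props[OF assms(3)[rule_format, OF w] assms(2)])
  qed
  have key: "(\<Sum>x\<in>V. gdist (bfs r) r x) \<le> (\<Sum>x\<in>V. gdist (bfs r) w x)" if w: "w \<in> V" for w
  proof -
    have "(\<Sum>x\<in>V. gdist (bfs r) r x) \<le> (\<Sum>x\<in>V. gdist (bfs w) w x)"
      using assms(5)[rule_format, OF w] unfolding Sd_def .
    also have "\<dots> \<le> (\<Sum>x\<in>V. gdist E w x)"
    proof (intro sum_mono)
      fix x assume x: "x \<in> V"
      show "gdist (bfs w) w x \<le> gdist E w x"
        using props[OF w] x by (intro gdist_le) blast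
    qed
    also have "\<dots> \<le> (\<Sum>x\<in>V. gdist (bfs r) w x)"
    proof (intro sum_mono)
      fix x assume x: "x \<in> V"
      have pr: "bfs r \<subseteq> E" "\<forall>x\<in>V. rch (bfs r) r x (gdist E r x)" using props[OF assms(4)] by blast+
      obtain k where "rch (bfs r) w x k" using rch_join[OF pr(2)[rule_format, OF w] pr(2)[rule_format, OF x]] by blast
      then have "rch (bfs r) w x (gdist (bfs r) w x)" by (rule gdist_rch)
      then have "rch E w x (gdist (bfs r) w x)" by (rule rch_mono[OF _ pr(1)])
      then show "gdist E w x \<le> gdist (bfs r) w x" by (rule gdist_le)
    qed
    finally show ?thesis .
  qed
  show ?thesis unfolding centroid_def vertex_deviation_def
  proof (intro conjI ballI assms(4))
    fix w assume w: "w \<in> V"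
    have "(\<Sum>u\<in>V. real (gdist (bfs r) r u)) \<le> (\<Sum>u\<in>V. real (gdist (bfs r) w u))"
      using key[OF w] by (simp only: of_nat_sum[symmetric] of_nat_le_iff)
    then show "1 / real (card V) * (\<Sum>u\<in>V. real (gdist (bfs r) r u))
          \<le> 1 / real (card V) * (\<Sum>u\<in>V. real (gdist (bfs r) w u))"
      by (rule mult_left_mono) simp_all
  qed
qed

end
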